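(* Let $\mathcal{T},\mathcal{U},\mathcal{B}$ be tile sets with mutually consistent frequencies and let $U\in\mathcal{U}$. Then \[ d(\mathcal{T}\cup\{U\},\mathcal{U};\mathcal{B})\le d(\mathcal{T},\mathcal{U};\mathcal{B}). \]
   Context: Fix $n,m\ge1$; $\mathcal{D}$ is the set of $n\times m$ binary matrices. A tile is $T=(t(T),a(T))$ with nonempty $t(T)\subseteq\{1..n\}$, $a(T)\subseteq\{1..m\}$, $\mathrm{area}(T)=t(T)\times a(T)$. $\mathrm{fr}(T;D)=\frac1{|\mathrm{area}(T)|}\sum_{(i,j)\in\mathrm{area}(T)}D(i,j)$, $\mathrm{fr}(T;p)=\sum_Dp(D)\mathrm{fr}(T;D)$. Each tile carries a target frequency $\alpha_T$; tile sets are consistent if some distribution on $\mathcal{D}$ attains all target frequencies simultaneously. For a tile set $\mathcal{T}$, $p^*_{\mathcal{T}}$ is the entropy-maximising distribution among those with $\mathrm{fr}(T;p)=\alpha_T$ for all $T\in\mathcal{T}$. $\mathrm{KL}(\mathcal{T}\|\mathcal{U})=\mathrm{KL}(p^*_{\mathcal{T}}\|p^*_{\mathcal{U}})$. With $\mathcal{M}=\mathcal{T}\cup\mathcal{U}\cup\mathcal{B}$, $d(\mathcal{T},\mathcal{U};\mathcal{B})=\frac{\mathrm{KL}(\mathcal{M}\|\mathcal{U}\cup\mathcal{B})+\mathrm{KL}(\mathcal{M}\|\mathcal{T}\cup\mathcal{B})}{\mathrm{KL}(\mathcal{M}\|\mathcal{B})}$, defined as $1$ if $\mathrm{KL}(\mathcal{M}\|\mathcal{B})=0$.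 *)

theory Defs
  imports Complex_Main
begin

text \<open>A binary n x m matrix is represented by the set of its 1-entries, a subset of
  {1..n} x {1..m}.  The set of all such matrices is D.\<close>

type_synonym matrix = "(nat \<times> nat) set"

definition matrices :: "nat \<Rightarrow> nat \<Rightarrow> matrix set" where
  "matrices n m = Pow ({1..n} \<times> {1..m})"

text \<open>A tile is a pair (t(T), a(T)) of row and column sets.\<close>

type_synonym tile = "nat set \<times> nat set"

definition is_tile :: "nat \<Rightarrow> nat \<Rightarrow> tile \<Rightarrow> bool" where
  "is_tile n m T \<longleftrightarrow> fst T \<noteq> {} \<and> fst T \<subseteq> {1..n} \<and> snd T \<noteq> {} \<and> snd T \<subseteq> {1..m}"

definition area :: "tile \<Rightarrow> (nat \<times> nat) set" where
  "area T = fst T \<times> snd T"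

definition fr_mat :: "tile \<Rightarrow> matrix \<Rightarrow> real" where
  "fr_mat T D = (\<Sum>c\<in>area T. if c \<in> D then 1 else 0) / real (card (area T))"

definition is_distr :: "nat \<Rightarrow> nat \<Rightarrow> (matrix \<Rightarrow> real) \<Rightarrow> bool" where
  "is_distr n m p \<longleftrightarrow> (\<forall>D\<in>matrices n m. 0 \<le> p D) \<and> (\<forall>D. D \<notin> matrices n m \<longrightarrow> p D = 0)
      \<and> (\<Sum>D\<in>matrices n m. p D) = 1"

definition fr_distr :: "nat \<Rightarrow> nat \<Rightarrow> tile \<Rightarrow> (matrix \<Rightarrow> real) \<Rightarrow> real" where
  "fr_distr n m T p = (\<Sum>D\<in>matrices n m. p D * fr_mat T D)"

definition feasible :: "nat \<Rightarrow> nat \<Rightarrow> (tile \<Rightarrow> real) \<Rightarrow> tile set \<Rightarrow> (matrix \<Rightarrow> real) \<Rightarrow> bool" where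
  "feasible n m alpha TS p \<longleftrightarrow> is_distr n m p \<and> (\<forall>T\<in>TS. fr_distr n m T p = alpha T)"

definition consistent :: "nat \<Rightarrow> nat \<Rightarrow> (tile \<Rightarrow> real) \<Rightarrow> tile set \<Rightarrow> bool" where
  "consistent n m alpha TS \<longleftrightarrow> (\<exists>p. feasible n m alpha TS p)"

text \<open>Shannon entropy (natural log; convention 0 ln 0 = 0 holds since ln 0 = 0).\<close>

definition entropy :: "nat \<Rightarrow> nat \<Rightarrow> (matrix \<Rightarrow> real) \<Rightarrow> real" where
  "entropy n m p = - (\<Sum>D\<in>matrices n m. p D * ln (p D))"

definition maxent :: "nat \<Rightarrow> nat \<Rightarrow> (tile \<Rightarrow> real) \<Rightarrow> tile set \<Rightarrow> (matrix \<Rightarrow> real)" where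
  "maxent n m alpha TS = (THE p. feasible n m alpha TS p \<and>
      (\<forall>q. feasible n m alpha TS q \<longrightarrow> entropy n m q \<le> entropy n m p))"

text \<open>KL divergence (natural log). Terms with p D = 0 contribute 0.\<close>

definition KL :: "nat \<Rightarrow> nat \<Rightarrow> (matrix \<Rightarrow> real) \<Rightarrow> (matrix \<Rightarrow> real) \<Rightarrow> real" where
  "KL n m p q = (\<Sum>D\<in>matrices n m. p D * ln (p D / q D))"

definition KL_tiles :: "nat \<Rightarrow> nat \<Rightarrow> (tile \<Rightarrow> real) \<Rightarrow> tile set \<Rightarrow> tile set \<Rightarrow> real" where
  "KL_tiles n m alpha TS US = KL n m (maxent n m alpha TS) (maxent n m alpha US)"

definition dist_d :: "nat \<Rightarrow> nat \<Rightarrow> (tile \<Rightarrow> real) \<Rightarrow> tile set \<Rightarrow> tile set \<Rightarrow> tile set \<Rightarrow> real" where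
  "dist_d n m alpha TS US BS =
    (let MS = TS \<union> US \<union> BS in
     if KL_tiles n m alpha MS BS = 0 then 1
     else (KL_tiles n m alpha MS (US \<union> BS) + KL_tiles n m alpha MS (TS \<union> BS))
          / KL_tiles n m alpha MS BS)"

end

theory Submission imports Defs "HOL-Analysis.Analysis" "HOL-Real_Asymp.Real_Asymp" begin

lemma xlnx_tangent:
  fixes x y :: real assumes "x > 0" "y \<ge> 0"
  shows "y * ln x + y - x \<le> y * ln y"
proof (cases "y = 0")
  case True then show ?thesis using assms by simp
next
  case False
  then have y: "y > 0" using assms by simp
  have "ln (x / y) \<le> x / y - 1" using ln_le_minus_one assms y by simp
  then have "ln x - ln y \<le> x / y - 1" using assms y by (simp add: ln_div)
  then have "y * (ln x - ln y) \<le> y * (x / y - 1)" using y by (simp add: mult_left_mono)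
  then show ?thesis using y by (simp add: algebra_simps)
qed

lemma xlnx_chord:
  fixes a b t :: real assumes "a \<ge> 0" "b \<ge> 0" "0 \<le> t" "t \<le> 1"
    and c: "(1 - t) * a + t * b > 0"
  shows "((1 - t) * a + t * b) * ln ((1 - t) * a + t * b) \<le> (1 - t) * (a * ln a) + t * (b * ln b)"
proof -
  define c where "c = (1 - t) * a + t * b"
  have 1: "a * ln c + a - c \<le> a * ln a" using xlnx_tangent c assms c_def by auto
  have 2: "b * ln c + b - c \<le> b * ln b" using xlnx_tangent c assms c_def by auto
  have "(1 - t) * (a * ln c + a - c) + t * (b * ln c + b - c) \<le> (1 - t) * (a * ln a) + t * (b * ln b)"
    using 1 2 assms by (intro add_mono mult_left_mono) auto
  moreover have "(1 - t) * (a * ln c + a - c) + t * (b * ln c + b - c) = c * ln c"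
    unfolding c_def by (simp add: algebra_simps)
  ultimately show ?thesis unfolding c_def by simp
qed

lemma xlnx_cont: "continuous_on {0..} (\<lambda>x::real. x * ln x)"
proof -
  have "continuous (at x within {0..}) (\<lambda>x::real. x * ln x)" if "x \<ge> 0" for x
  proof (cases "x = 0")
    case True
    have "((\<lambda>x::real. x * ln x) \<longlongrightarrow> 0) (at_right 0)" by real_asymp
    then show ?thesis using True by (simp add: continuous_within at_within_Ici_at_right)
  next
    case False
    then have "x > 0" using that by simp
    then have "isCont (\<lambda>x::real. x * ln x) x" by (intro continuous_intros) auto
    then show ?thesis using continuous_at_imp_continuous_at_within by blast
  qed
  then show ?thesis by (simp add: continuous_on_eq_continuous_within)
qed

lemma xlnx_deriv:
  fixes a b :: real assumes "a > 0"
  shows "((\<lambda>t. (a + t * b) * ln (a + t * b)) has_real_derivative ((ln a + 1) * b)) (at 0)"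
  using assms by (auto intro!: derivative_eq_intros simp: field_simps)


lemma finite_matrices: "finite (matrices n m)"
  by (simp add: matrices_def)

lemma feasible_comb:
  assumes p: "feasible n m alpha X p" and s: "feasible n m alpha X s"
    and nn: "\<forall>D\<in>matrices n m. 0 \<le> p D + t * (s D - p D)"
  shows "feasible n m alpha X (\<lambda>D. p D + t * (s D - p D))"
proof -
  let ?S = "matrices n m"
  have "(\<Sum>D\<in>?S. p D + t * (s D - p D)) = (\<Sum>D\<in>?S. p D) + t * ((\<Sum>D\<in>?S. s D) - (\<Sum>D\<in>?S. p D))"
    by (simp add: sum.distrib flip: sum_distrib_left sum_subtractf)
  moreover have "(\<Sum>D\<in>?S. (p D + t * (s D - p D)) * fr_mat T D) =
      (\<Sum>D\<in>?S. p D * fr_mat T D) + t * ((\<Sum>D\<in>?S. s D * fr_mat T D) - (\<Sum>D\<in>?S. p D * fr_mat T D))" for T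
    by (simp add: sum.distrib sum_distrib_left sum_subtractf algebra_simps)
  ultimately show ?thesis using p s nn
    by (auto simp: feasible_def is_distr_def fr_distr_def)
qed

definition maximizer :: "nat \<Rightarrow> nat \<Rightarrow> (tile \<Rightarrow> real) \<Rightarrow> tile set \<Rightarrow> (matrix \<Rightarrow> real) \<Rightarrow> bool" where
  "maximizer n m alpha X q \<longleftrightarrow> feasible n m alpha X q \<and>
      (\<forall>s. feasible n m alpha X s \<longrightarrow> entropy n m s \<le> entropy n m q)"

lemma feasible_nn: "feasible n m alpha X p \<Longrightarrow> D \<in> matrices n m \<Longrightarrow> 0 \<le> p D"
  by (simp add: feasible_def is_distr_def)

lemma feasible_out: "feasible n m alpha X p \<Longrightarrow> D \<notin> matrices n m \<Longrightarrow> p D = 0"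
  by (simp add: feasible_def is_distr_def)

lemma feasible_sum: "feasible n m alpha X p \<Longrightarrow> (\<Sum>D\<in>matrices n m. p D) = 1"
  by (simp add: feasible_def is_distr_def)

lemma maximizer_support:
  assumes q: "maximizer n m alpha X q" and s: "feasible n m alpha X s"
    and D0: "D0 \<in> matrices n m" "s D0 > 0"
  shows "q D0 > 0"
proof (rule ccontr)
  assume "\<not> q D0 > 0"
  moreover have "0 \<le> q D0" using q D0(1) feasible_nn by (auto simp: maximizer_def)
  ultimately have q0: "q D0 = 0" by simp
  let ?S = "matrices n m"
  let ?f = "\<lambda>x::real. x * ln x"
  have fq: "feasible n m alpha X q" using q by (simp add: maximizer_def)
  define K where "K = (\<Sum>D\<in>?S. ?f (s D) - ?f (q D))"
  define \<sigma> where "\<sigma> = (\<Sum>D\<in>?S. if q D = 0 then s D else 0)"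
  have "s D0 \<le> \<sigma>" unfolding \<sigma>_def
    using member_le_sum[of D0 ?S "\<lambda>D. if q D = 0 then s D else 0"] D0 q0 finite_matrices
      feasible_nn[OF s] by auto
  then have sig: "\<sigma> > 0" using D0 by simp
  define t where "t = exp (- (\<bar>K\<bar> + 1) / \<sigma>)"
  have t0: "0 < t" unfolding t_def by simp
  have t1: "t < 1" unfolding t_def using sig by (simp add: divide_neg_pos)
  have lnt: "ln t = - (\<bar>K\<bar> + 1) / \<sigma>" unfolding t_def by simp
  define r where "r = (\<lambda>D. q D + t * (s D - q D))"
  have rnn: "\<forall>D\<in>?S. 0 \<le> r D"
  proof
    fix D assume "D \<in> ?S"
    then have "0 \<le> q D" "0 \<le> s D" using feasible_nn fq s by auto
    then have "0 \<le> (1 - t) * q D + t * s D" using t0 t1 by simp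
    then show "0 \<le> r D" unfolding r_def by (simp add: algebra_simps)
  qed
  have fr: "feasible n m alpha X r" unfolding r_def using feasible_comb[OF fq s] rnn r_def by simp
  define g where "g = (\<lambda>D. ?f (s D) - ?f (q D) + (if q D = 0 then s D else 0) * ln t)"
  have pw: "?f (r D) \<le> ?f (q D) + t * g D" if D: "D \<in> ?S" for D
  proof -
    have qn: "0 \<le> q D" and sn: "0 \<le> s D" using feasible_nn fq s D by auto
    have rD: "r D = (1 - t) * q D + t * s D" unfolding r_def by (simp add: algebra_simps)
    show ?thesis
    proof (cases "q D = 0")
      case True
      show ?thesis
      proof (cases "s D = 0")
        case True
        then show ?thesis using \<open>q D = 0\<close> by (simp add: rD g_def)
      next
        case False
        then have "s D > 0" using sn by simp
        then have "?f (r D) = t * (?f (s D) + s D * ln t)"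
          using \<open>q D = 0\<close> t0 by (simp add: rD ln_mult algebra_simps)
        then show ?thesis using \<open>q D = 0\<close> by (simp add: g_def)
      qed
    next
      case False
      then have "q D > 0" using qn by simp
      then have pos: "(1 - t) * q D + t * s D > 0" using t0 t1 sn
        by (smt (verit) mult_nonneg_nonneg mult_pos_pos)
      have "?f (r D) \<le> (1 - t) * ?f (q D) + t * ?f (s D)"
        unfolding rD using xlnx_chord[OF qn sn _ _ pos] t0 t1 by simp
      then show ?thesis using False by (simp add: g_def algebra_simps)
    qed
  qed
  have "(\<Sum>D\<in>?S. ?f (r D)) \<le> (\<Sum>D\<in>?S. ?f (q D) + t * g D)"
    by (rule sum_mono) (use pw in auto)
  also have "\<dots> = (\<Sum>D\<in>?S. ?f (q D)) + t * (\<Sum>D\<in>?S. g D)"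
    by (simp add: sum.distrib sum_distrib_left)
  also have "(\<Sum>D\<in>?S. g D) = K + \<sigma> * ln t"
    unfolding K_def \<sigma>_def g_def by (simp add: sum.distrib sum_distrib_right)
  also have "K + \<sigma> * ln t = K - \<bar>K\<bar> - 1" using sig by (simp add: lnt)
  also have "(\<Sum>D\<in>?S. ?f (q D)) + t * (K - \<bar>K\<bar> - 1) < (\<Sum>D\<in>?S. ?f (q D))"
    using t0 by (simp add: mult_pos_neg abs_if)
  finally have "entropy n m q < entropy n m r" unfolding entropy_def by simp
  moreover have "entropy n m r \<le> entropy n m q" using q fr by (simp add: maximizer_def)
  ultimately show False by simp
qed


lemma maximizer_orth:
  assumes q: "maximizer n m alpha X q" and s: "feasible n m alpha X s"
  shows "(\<Sum>D\<in>matrices n m. s D * ln (q D)) = (\<Sum>D\<in>matrices n m. q D * ln (q D))"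
proof -
  let ?S = "matrices n m"
  let ?f = "\<lambda>x::real. x * ln x"
  have fq: "feasible n m alpha X q" using q by (simp add: maximizer_def)
  define P where "P = {D\<in>?S. q D > 0}"
  have finP: "finite P" unfolding P_def using finite_matrices by simp
  have PS: "P \<subseteq> ?S" unfolding P_def by auto
  have out: "q D = 0 \<and> s D = 0" if "D \<in> ?S - P" for D
  proof -
    have "q D = 0" using that feasible_nn[OF fq] unfolding P_def by force
    moreover have "s D = 0"
    proof (rule ccontr)
      assume "s D \<noteq> 0"
      then have "s D > 0" using that feasible_nn[OF s] by force
      then have "q D > 0" using maximizer_support[OF q s] that by auto
      then show False using \<open>q D = 0\<close> by simp
    qed
    ultimately show ?thesis by simp
  qed
  have Pne: "P \<noteq> {}"
  proof
    assume "P = {}"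
    then have "(\<Sum>D\<in>?S. q D) = 0" using out by (intro sum.neutral) auto
    then show False using feasible_sum[OF fq] by simp
  qed
  define g where "g = (\<lambda>t. \<Sum>D\<in>P. ?f (q D + t * (s D - q D)))"
  have ent: "entropy n m (\<lambda>D. q D + t * (s D - q D)) = - g t" for t
  proof -
    have "(\<Sum>D\<in>?S. ?f (q D + t * (s D - q D))) = g t"
      unfolding g_def using out finite_matrices PS by (intro sum.mono_neutral_right) auto
    then show ?thesis unfolding entropy_def by simp
  qed
  define \<delta> where "\<delta> = Min ((\<lambda>D. q D / (\<bar>s D - q D\<bar> + 1)) ` P)"
  have dpos: "\<delta> > 0" unfolding \<delta>_def using finP Pne
    by (subst Min_gr_iff) (auto simp: P_def intro!: divide_pos_pos)
  have loc: "\<forall>y. \<bar>0 - y\<bar> < \<delta> \<longrightarrow> g 0 \<le> g y"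
  proof (intro allI impI)
    fix y :: real assume y: "\<bar>0 - y\<bar> < \<delta>"
    have nn: "\<forall>D\<in>?S. 0 \<le> q D + y * (s D - q D)"
    proof
      fix D assume D: "D \<in> ?S"
      show "0 \<le> q D + y * (s D - q D)"
      proof (cases "D \<in> P")
        case True
        let ?b = "s D - q D"
        have "\<delta> \<le> q D / (\<bar>?b\<bar> + 1)" unfolding \<delta>_def using finP True by (intro Min_le) auto
        then have d1: "\<delta> * (\<bar>?b\<bar> + 1) \<le> q D" by (simp add: le_divide_eq add_pos_nonneg)
        have "\<bar>y * ?b\<bar> = \<bar>y\<bar> * \<bar>?b\<bar>" by (simp add: abs_mult)
        also have "\<dots> \<le> \<delta> * \<bar>?b\<bar>" using y by (intro mult_right_mono) auto
        also have "\<dots> \<le> \<delta> * (\<bar>?b\<bar> + 1)" using dpos by simp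
        finally show ?thesis using d1 by linarith
      next
        case False
        then show ?thesis using out D by simp
      qed
    qed
    have "feasible n m alpha X (\<lambda>D. q D + y * (s D - q D))" using feasible_comb[OF fq s nn] .
    then have "entropy n m (\<lambda>D. q D + y * (s D - q D)) \<le> entropy n m q"
      using q by (simp add: maximizer_def)
    moreover have "entropy n m q = - g 0" using ent[of 0] by simp
    ultimately show "g 0 \<le> g y" using ent[of y] by simp
  qed
  have der: "(g has_real_derivative (\<Sum>D\<in>P. (ln (q D) + 1) * (s D - q D))) (at 0)"
    unfolding g_def by (rule DERIV_sum) (rule xlnx_deriv, simp add: P_def)
  have z: "(\<Sum>D\<in>P. (ln (q D) + 1) * (s D - q D)) = 0"
    using DERIV_local_min[OF der dpos loc] .
  have sP: "(\<Sum>D\<in>P. s D - q D) = 0"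
  proof -
    have "(\<Sum>D\<in>P. s D - q D) = (\<Sum>D\<in>?S. s D - q D)"
      using out finite_matrices PS by (intro sum.mono_neutral_left) auto
    also have "\<dots> = 0" using feasible_sum[OF fq] feasible_sum[OF s] by (simp add: sum_subtractf)
    finally show ?thesis .
  qed
  have "(\<Sum>D\<in>P. (ln (q D) + 1) * (s D - q D)) = (\<Sum>D\<in>P. s D * ln (q D)) - (\<Sum>D\<in>P. q D * ln (q D)) + (\<Sum>D\<in>P. s D - q D)"
    by (simp add: algebra_simps sum.distrib sum_subtractf)
  then have eqP: "(\<Sum>D\<in>P. s D * ln (q D)) = (\<Sum>D\<in>P. q D * ln (q D))" using z sP by simp
  have "(\<Sum>D\<in>?S. s D * ln (q D)) = (\<Sum>D\<in>P. s D * ln (q D))"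
    using out finite_matrices PS by (intro sum.mono_neutral_right) auto
  moreover have "(\<Sum>D\<in>?S. q D * ln (q D)) = (\<Sum>D\<in>P. q D * ln (q D))"
    using out finite_matrices PS by (intro sum.mono_neutral_right) auto
  ultimately show ?thesis using eqP by simp
qed


lemma maximizer_unique:
  assumes q1: "maximizer n m alpha X q1" and q2: "maximizer n m alpha X q2"
  shows "q1 = q2"
proof
  fix D
  let ?S = "matrices n m"
  have f1: "feasible n m alpha X q1" and f2: "feasible n m alpha X q2"
    using q1 q2 by (auto simp: maximizer_def)
  have "entropy n m q1 = entropy n m q2" using q1 q2 f1 f2 unfolding maximizer_def
    by (meson order_antisym)
  then have e: "(\<Sum>D\<in>?S. q1 D * ln (q1 D)) = (\<Sum>D\<in>?S. q2 D * ln (q2 D))"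
    unfolding entropy_def by simp
  have a: "(\<Sum>D\<in>?S. q2 D * ln (q1 D)) = (\<Sum>D\<in>?S. q1 D * ln (q1 D))"
    using maximizer_orth[OF q1 f2] .
  have b: "(\<Sum>D\<in>?S. q1 D * ln (q2 D)) = (\<Sum>D\<in>?S. q2 D * ln (q2 D))"
    using maximizer_orth[OF q2 f1] .
  have "(\<Sum>D\<in>?S. (q1 D - q2 D) * (ln (q1 D) - ln (q2 D))) =
     (\<Sum>D\<in>?S. q1 D * ln (q1 D)) - (\<Sum>D\<in>?S. q1 D * ln (q2 D)) - (\<Sum>D\<in>?S. q2 D * ln (q1 D)) + (\<Sum>D\<in>?S. q2 D * ln (q2 D))"
    by (simp add: algebra_simps sum.distrib sum_subtractf)
  also have "\<dots> = 0" using a b e by simp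
  finally have sum0: "(\<Sum>D\<in>?S. (q1 D - q2 D) * (ln (q1 D) - ln (q2 D))) = 0" .
  have nn: "\<forall>D\<in>?S. 0 \<le> (q1 D - q2 D) * (ln (q1 D) - ln (q2 D))"
  proof
    fix D assume D: "D \<in> ?S"
    have "0 \<le> q1 D" "0 \<le> q2 D" using D feasible_nn f1 f2 by auto
    moreover have "q1 D > 0 \<longleftrightarrow> q2 D > 0"
      using maximizer_support[OF q1 f2 D] maximizer_support[OF q2 f1 D] by auto
    ultimately consider "q1 D = 0 \<and> q2 D = 0" | "q1 D > 0 \<and> q2 D > 0" by linarith
    then show "0 \<le> (q1 D - q2 D) * (ln (q1 D) - ln (q2 D))"
    proof cases
      case 2
      show ?thesis
      proof (cases "q1 D \<le> q2 D")
        case True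
        then have "ln (q1 D) \<le> ln (q2 D)" using 2 by simp
        then show ?thesis using True by (intro mult_nonpos_nonpos) auto
      next
        case False
        then have "ln (q2 D) \<le> ln (q1 D)" using 2 by simp
        then show ?thesis using False by (intro mult_nonneg_nonneg) auto
      qed
    qed simp
  qed
  show "q1 D = q2 D"
  proof (cases "D \<in> ?S")
    case False
    then show ?thesis using feasible_out[OF f1 False] feasible_out[OF f2 False] by simp
  next
    case D: True
    have z: "(q1 D - q2 D) * (ln (q1 D) - ln (q2 D)) = 0"
      using sum_nonneg_eq_0_iff[OF finite_matrices, where f="\<lambda>D. (q1 D - q2 D) * (ln (q1 D) - ln (q2 D))"] nn sum0 D by simp
    have "0 \<le> q1 D" "0 \<le> q2 D" using D feasible_nn f1 f2 by auto
    moreover have "q1 D > 0 \<longleftrightarrow> q2 D > 0"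
      using maximizer_support[OF q1 f2 D] maximizer_support[OF q2 f1 D] by auto
    ultimately consider "q1 D = 0 \<and> q2 D = 0" | "q1 D > 0 \<and> q2 D > 0" by linarith
    then show ?thesis
    proof cases
      case 2
      then show ?thesis using z by (auto simp: mult_eq_0_iff)
    qed simp
  qed
qed

lemma maximizer_exists:
  assumes "consistent n m alpha X"
  shows "\<exists>q. maximizer n m alpha X q"
proof -
  let ?S = "matrices n m"
  let ?F = "{p. feasible n m alpha X p}"
  have ne: "?F \<noteq> {}" using assms by (auto simp: consistent_def)
  define Y where "Y = (\<lambda>D. if D \<in> ?S then {0..1::real} else {0})"
  have "compactin (product_topology (\<lambda>i. euclidean) UNIV) (PiE UNIV Y)"
    unfolding compactin_PiE Y_def by auto
  then have cK: "compact (PiE UNIV Y)" by (simp add: euclidean_product_topology)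
  have cont_coord: "continuous_on UNIV (\<lambda>p::matrix \<Rightarrow> real. p D)" for D by simp
  have cl: "closed ?F"
  proof -
    have "?F = (\<Inter>D\<in>?S. {p. 0 \<le> p D}) \<inter> (\<Inter>D\<in>-?S. {p. p D = 0}) \<inter> {p. (\<Sum>D\<in>?S. p D) = 1}
       \<inter> (\<Inter>T\<in>X. {p. fr_distr n m T p = alpha T})"
      by (auto simp: feasible_def is_distr_def)
    moreover have "closed {p::matrix \<Rightarrow> real. 0 \<le> p D}" for D
      by (intro closed_Collect_le) auto
    moreover have "closed {p::matrix \<Rightarrow> real. p D = 0}" for D
      by (intro closed_Collect_eq) auto
    moreover have "closed {p::matrix \<Rightarrow> real. (\<Sum>D\<in>?S. p D) = 1}"
      by (intro closed_Collect_eq continuous_intros) auto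
    moreover have "closed {p. fr_distr n m T p = alpha T}" for T
      unfolding fr_distr_def by (intro closed_Collect_eq continuous_intros) auto
    ultimately show ?thesis by (auto intro!: closed_Int closed_INT)
  qed
  have sub: "?F \<subseteq> PiE UNIV Y"
  proof
    fix p assume "p \<in> ?F"
    then have fp: "feasible n m alpha X p" by simp
    have "p D \<in> Y D" for D
    proof (cases "D \<in> ?S")
      case True
      have "p D \<le> (\<Sum>D\<in>?S. p D)"
        using member_le_sum[of D ?S p] True finite_matrices feasible_nn[OF fp] by auto
      then show ?thesis using True feasible_sum[OF fp] feasible_nn[OF fp True] by (simp add: Y_def)
    next
      case False
      then show ?thesis using feasible_out[OF fp False] by (simp add: Y_def)
    qed
    then show "p \<in> PiE UNIV Y" by auto
  qed
  have cF: "compact ?F"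
  proof -
    have "?F = PiE UNIV Y \<inter> ?F" using sub by auto
    then show ?thesis using compact_Int_closed[OF cK cl] by simp
  qed
  have ct: "continuous_on ?F (entropy n m)"
  proof -
    have cD: "continuous_on ?F (\<lambda>p. p D * ln (p D))" if D: "D \<in> ?S" for D
    proof (rule continuous_on_compose2[OF xlnx_cont, of ?F "\<lambda>p. p D"])
      show "continuous_on ?F (\<lambda>p. p D)" using continuous_on_subset[OF cont_coord] by blast
      show "(\<lambda>p. p D) ` ?F \<subseteq> {0..}" using feasible_nn D by auto
    qed
    have "continuous_on ?F (\<lambda>p. - (\<Sum>D\<in>?S. p D * ln (p D)))"
      by (intro continuous_on_minus continuous_on_sum cD)
    then show ?thesis unfolding entropy_def[abs_def] .
  qed
  obtain q where "q \<in> ?F" "\<forall>s\<in>?F. entropy n m s \<le> entropy n m q"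
    using continuous_attains_sup[OF cF ne ct] by blast
  then show ?thesis unfolding maximizer_def by auto
qed

lemma maxent_max:
  assumes "consistent n m alpha X"
  shows "maximizer n m alpha X (maxent n m alpha X)"
proof -
  have "\<exists>!q. maximizer n m alpha X q" using maximizer_exists[OF assms] maximizer_unique by blast
  then show ?thesis unfolding maxent_def maximizer_def[symmetric] by (rule theI')
qed


lemma feasible_mono: "feasible n m alpha X p \<Longrightarrow> Y \<subseteq> X \<Longrightarrow> feasible n m alpha Y p"
  by (auto simp: feasible_def)

lemma consistent_mono: "consistent n m alpha X \<Longrightarrow> Y \<subseteq> X \<Longrightarrow> consistent n m alpha Y"
  by (auto simp: consistent_def intro: feasible_mono)

lemma KL_tiles_eq:
  assumes M: "consistent n m alpha M" and XM: "X \<subseteq> M"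
  shows "KL_tiles n m alpha M X = entropy n m (maxent n m alpha X) - entropy n m (maxent n m alpha M)"
proof -
  let ?S = "matrices n m"
  define p where "p = maxent n m alpha M"
  define q where "q = maxent n m alpha X"
  have mp: "maximizer n m alpha M p" unfolding p_def by (rule maxent_max[OF M])
  have mq: "maximizer n m alpha X q" unfolding q_def by (rule maxent_max[OF consistent_mono[OF M XM]])
  have fp: "feasible n m alpha X p" using mp XM feasible_mono by (auto simp: maximizer_def)
  have "(\<Sum>D\<in>?S. p D * ln (p D / q D)) = (\<Sum>D\<in>?S. p D * ln (p D) - p D * ln (q D))"
  proof (rule sum.cong)
    fix D assume D: "D \<in> ?S"
    show "p D * ln (p D / q D) = p D * ln (p D) - p D * ln (q D)"
    proof (cases "p D = 0")
      case False
      then have "p D > 0" using feasible_nn[OF fp D] by simp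
      moreover then have "q D > 0" using maximizer_support[OF mq fp D] by simp
      ultimately show ?thesis by (simp add: ln_div algebra_simps)
    qed simp
  qed simp
  also have "\<dots> = (\<Sum>D\<in>?S. p D * ln (p D)) - (\<Sum>D\<in>?S. q D * ln (q D))"
    using maximizer_orth[OF mq fp] by (simp add: sum_subtractf)
  finally show ?thesis unfolding KL_tiles_def KL_def entropy_def p_def q_def by simp
qed

lemma entropy_anti:
  assumes M: "consistent n m alpha M" and "X \<subseteq> Y" "Y \<subseteq> M"
  shows "entropy n m (maxent n m alpha Y) \<le> entropy n m (maxent n m alpha X)"
proof -
  have mY: "maximizer n m alpha Y (maxent n m alpha Y)"
    by (rule maxent_max[OF consistent_mono[OF M assms(3)]])
  have mX: "maximizer n m alpha X (maxent n m alpha X)"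
    by (rule maxent_max[OF consistent_mono[OF M]]) (use assms in auto)
  have "feasible n m alpha X (maxent n m alpha Y)"
    using mY assms(2) feasible_mono by (auto simp: maximizer_def)
  then show ?thesis using mX by (auto simp: maximizer_def)
qed

theorem theorem9:
  fixes n m :: nat and alpha :: "tile \<Rightarrow> real" and TS US BS :: "tile set" and U :: tile
  assumes "n \<ge> 1" and "m \<ge> 1"
    and "\<forall>T\<in>TS \<union> US \<union> BS. is_tile n m T"
    and "consistent n m alpha (TS \<union> US \<union> BS)"
    and "U \<in> US"
  shows "dist_d n m alpha (insert U TS) US BS \<le> dist_d n m alpha TS US BS"
proof -
  define M where "M = TS \<union> US \<union> BS"
  have M: "consistent n m alpha M" using assms(4) by (simp add: M_def)
  have MU: "insert U TS \<union> US \<union> BS = M" using assms(5) by (auto simp: M_def)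
  let ?K = "KL_tiles n m alpha M"
  let ?H = "\<lambda>X. entropy n m (maxent n m alpha X)"
  have b: "?K (insert U TS \<union> BS) \<le> ?K (TS \<union> BS)"
  proof -
    have "?K (insert U TS \<union> BS) = ?H (insert U TS \<union> BS) - ?H M"
      by (rule KL_tiles_eq[OF M]) (use assms(5) in \<open>auto simp: M_def\<close>)
    moreover have "?K (TS \<union> BS) = ?H (TS \<union> BS) - ?H M"
      by (rule KL_tiles_eq[OF M]) (auto simp: M_def)
    moreover have "?H (insert U TS \<union> BS) \<le> ?H (TS \<union> BS)"
      by (rule entropy_anti[OF M]) (use assms(5) in \<open>auto simp: M_def\<close>)
    ultimately show ?thesis by simp
  qed
  have c: "?K BS \<ge> 0"
  proof -
    have "?K BS = ?H BS - ?H M" by (rule KL_tiles_eq[OF M]) (auto simp: M_def)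
    moreover have "?H M \<le> ?H BS" by (rule entropy_anti[OF M]) (auto simp: M_def)
    ultimately show ?thesis by simp
  qed
  show ?thesis
  proof (cases "?K BS = 0")
    case True
    then show ?thesis unfolding dist_d_def Let_def MU M_def[symmetric] by simp
  next
    case False
    then have "?K BS > 0" using c by simp
    then have "(?K (US \<union> BS) + ?K (insert U TS \<union> BS)) / ?K BS \<le> (?K (US \<union> BS) + ?K (TS \<union> BS)) / ?K BS"
      using b by (intro divide_right_mono) auto
    then show ?thesis using False unfolding dist_d_def Let_def MU M_def[symmetric] by simp
  qed
qed

end
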